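(* Let $\Sigma=\{0,1\}$. For any $D\in\mathbb N_+$ there exists $\mathcal F\subseteq\Sigma^{\Sigma^*}$ such that $\mathrm{Ldim}(\mathcal F)=D$ and $\mathrm{VCdim}(\mathcal F)=1$ over the domain $\Sigma^*$, and $\mathrm{VCdim}(\mathcal F^{\mathrm{e2e}(T)})=D$ for every $T>D$, even over the domain $\Sigma^n$ with $n=\lceil\log_2 D\rceil+1$.
   Context: For $f:\Sigma^*\to\Sigma$, $\bar f(\mathbf x)$ is $\mathbf x$ with $f(\mathbf x)$ appended; $f^{\mathrm{CoT}(T)}=\bar f^{\circ T}$; $f^{\mathrm{e2e}(T)}(\mathbf x)$ is the last token of $f^{\mathrm{CoT}(T)}(\mathbf x)$; $\mathcal F^{\mathrm{e2e}(T)}=\{f^{\mathrm{e2e}(T)}:f\in\mathcal F\}$. $\mathrm{VCdim}$ is the VC dimension. Littlestone dimension $\mathrm{Ldim}(\mathcal F)$: the largest depth $d$ of a complete binary tree with nodes labeled by elements of $\Sigma^*$ such that for every root-to-leaf path $\epsilon\in\{0,1\}^d$ some $f\in\mathcal F$ satisfies $f(\text{$i$-th node on the path})=\epsilon_i$ for all $i\in[d]$ (with $\epsilon_i=1$ meaning the path turns right). *)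

theory Defs
  imports Complex_Main "HOL-Library.Extended_Nat"
begin

text \<open>Alphabet Sigma = {0,1} is rendered as bool (False = 0, True = 1);
  strings Sigma* are bool lists.\<close>

definition shatters :: "('a \<Rightarrow> bool) set \<Rightarrow> 'a set \<Rightarrow> bool" where
  "shatters F S \<longleftrightarrow> (\<forall>A\<subseteq>S. \<exists>f\<in>F. \<forall>x\<in>S. f x = (x \<in> A))"

definition VCdim :: "'a set \<Rightarrow> ('a \<Rightarrow> bool) set \<Rightarrow> enat" where
  "VCdim X F = Sup {enat (card S) | S. S \<subseteq> X \<and> finite S \<and> shatters F S}"

text \<open>Littlestone dimension: a complete binary tree of depth d is given by a
  labelling t of the nodes, where a node is identified by the path (bool list of
  length < d) leading to it from the root (True = turn right).\<close>
definition Ldim :: "('a \<Rightarrow> bool) set \<Rightarrow> enat" where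
  "Ldim F = Sup {enat d | d. \<exists>t :: bool list \<Rightarrow> 'a.
      \<forall>eps. length eps = d \<longrightarrow> (\<exists>f\<in>F. \<forall>i<d. f (t (take i eps)) = eps ! i)}"

definition bar :: "(bool list \<Rightarrow> bool) \<Rightarrow> bool list \<Rightarrow> bool list" where
  "bar f x = x @ [f x]"

definition CoT :: "nat \<Rightarrow> (bool list \<Rightarrow> bool) \<Rightarrow> bool list \<Rightarrow> bool list" where
  "CoT T f = (bar f ^^ T)"

definition e2e :: "nat \<Rightarrow> (bool list \<Rightarrow> bool) \<Rightarrow> bool list \<Rightarrow> bool" where
  "e2e T f x = last (CoT T f x)"

end

theory Submission imports Defs "HOL-Library.Sublist" begin

lemma card_bool_lists: "card {b :: bool list. length b = D} = 2 ^ D"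
  and fin_bool_lists: "finite {b :: bool list. length b = D}"
proof -
  have "{b :: bool list. length b = D} = {xs. set xs \<subseteq> UNIV \<and> length xs = D}" by auto
  then show "card {b :: bool list. length b = D} = 2 ^ D" "finite {b :: bool list. length b = D}"
    using card_lists_length_eq[of "UNIV :: bool set" D] finite_lists_length_eq[of "UNIV :: bool set" D]
    by (auto simp: card_UNIV_bool)
qed

lemma shatters_card:
  assumes "finite G" "shatters G S" "finite S"
  shows "2 ^ card S \<le> card G"
proof -
  from assms(2) have "\<forall>A\<in>Pow S. \<exists>g\<in>G. \<forall>x\<in>S. g x = (x \<in> A)" unfolding shatters_def by auto
  then obtain g where g: "\<And>A. A \<in> Pow S \<Longrightarrow> g A \<in> G \<and> (\<forall>x\<in>S. g A x = (x \<in> A))" by metis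
  have "inj_on g (Pow S)"
  proof (rule inj_onI)
    fix A B assume AB: "A \<in> Pow S" "B \<in> Pow S" "g A = g B"
    show "A = B" using g[OF AB(1)] g[OF AB(2)] AB by auto
  qed
  moreover have "g ` Pow S \<subseteq> G" using g by auto
  ultimately have "card (Pow S) \<le> card G" using card_inj_on_le assms(1) by blast
  then show ?thesis using card_Pow[OF assms(3)] by simp
qed

lemma shatters_le:
  assumes "finite G" "card G \<le> 2 ^ D" "shatters G S" "finite S"
  shows "card S \<le> D"
proof -
  have "(2::nat) ^ card S \<le> 2 ^ D" using shatters_card[OF assms(1,3,4)] assms(2) by (meson order.trans)
  then show ?thesis by (rule power_le_imp_le_exp[rotated]) auto
qed

lemma VCdim_eqI:
  assumes "\<And>S. S \<subseteq> X \<Longrightarrow> finite S \<Longrightarrow> shatters F S \<Longrightarrow> card S \<le> D"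
    and "Z \<subseteq> X" "finite Z" "shatters F Z" "card Z = D"
  shows "VCdim X F = enat D"
  unfolding VCdim_def
proof (rule antisym)
  show "Sup {enat (card S) |S. S \<subseteq> X \<and> finite S \<and> shatters F S} \<le> enat D"
    by (rule Sup_least) (use assms(1) in auto)
  show "enat D \<le> Sup {enat (card S) |S. S \<subseteq> X \<and> finite S \<and> shatters F S}"
    by (rule Sup_upper) (use assms(2-5) in auto)
qed

lemma first_diff:
  fixes xs ys :: "'a list"
  assumes "length xs = length ys" "xs \<noteq> ys"
  shows "\<exists>i<length xs. take i xs = take i ys \<and> xs ! i \<noteq> ys ! i"
proof -
  have ex: "\<exists>i. i < length xs \<and> xs ! i \<noteq> ys ! i" using assms nth_equalityI by blast
  define i where "i = (LEAST i. i < length xs \<and> xs ! i \<noteq> ys ! i)"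
  have i: "i < length xs \<and> xs ! i \<noteq> ys ! i" using LeastI_ex[OF ex] unfolding i_def .
  have lt: "xs ! j = ys ! j" if j: "j < i" for j
  proof -
    have "\<not> (j < length xs \<and> xs ! j \<noteq> ys ! j)"
      using not_less_Least[OF j[unfolded i_def]] .
    moreover have "j < length xs" using j i by simp
    ultimately show ?thesis by blast
  qed
  have "take i xs = take i ys"
    by (rule nth_equalityI) (use i assms lt in auto)
  then show ?thesis using i by blast
qed



definition idx :: "nat \<Rightarrow> (nat \<Rightarrow> bool list) \<Rightarrow> bool list \<Rightarrow> nat" where
  "idx D e x = (THE i. i < D \<and> e i = x)"

definition wd :: "nat \<Rightarrow> nat \<Rightarrow> (nat \<Rightarrow> bool list) \<Rightarrow> bool list \<Rightarrow> bool list option" where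
  "wd D n e y = (if n \<le> length y \<and> take n y \<in> e ` {..<D} then
     (if length (drop n y) < D then Some (drop n y @ [True])
      else if drop n y ! idx D e (take n y) then Some (take D (drop n y)) else None)
   else None)"

definition fb :: "nat \<Rightarrow> nat \<Rightarrow> (nat \<Rightarrow> bool list) \<Rightarrow> bool list \<Rightarrow> bool list \<Rightarrow> bool" where
  "fb D n e b y = (case wd D n e y of Some u \<Rightarrow> prefix u b | None \<Rightarrow> False)"

definition FF :: "nat \<Rightarrow> nat \<Rightarrow> (nat \<Rightarrow> bool list) \<Rightarrow> (bool list \<Rightarrow> bool) set" where
  "FF D n e = fb D n e ` {b. length b = D}"

lemma idx_e:
  assumes "inj_on e {..<D}" "i < D"
  shows "idx D e (e i) = i"
  unfolding idx_def
  by (rule the_equality) (use assms in \<open>auto dest: inj_onD\<close>)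

lemma wd_e:
  assumes inj: "inj_on e {..<D}" and len: "\<And>i. i < D \<Longrightarrow> length (e i) = n" and i: "i < D"
  shows "wd D n e (e i @ u) = (if length u < D then Some (u @ [True])
           else if u ! i then Some (take D u) else None)"
  using len[OF i] i idx_e[OF inj i] unfolding wd_def by auto

lemma fb_prefix:
  assumes inj: "inj_on e {..<D}" and len: "\<And>i. i < D \<Longrightarrow> length (e i) = n" and i: "i < D"
    and b: "length b = D" and k: "k < D"
  shows "fb D n e b (e i @ take k b) = b ! k"
proof -
  have "wd D n e (e i @ take k b) = Some (take k b @ [True])"
    using wd_e[OF inj len i] k b by simp
  moreover have "prefix (take k b @ [True]) b = b ! k"
  proof -
    have eq: "b = take k b @ b ! k # drop (Suc k) b" using k b by (simp add: id_take_nth_drop)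
    have "prefix (take k b @ [True]) b = prefix (take k b @ [True]) (take k b @ b ! k # drop (Suc k) b)"
      by (simp only: eq[symmetric])
    also have "\<dots> = b ! k" by simp
    finally show ?thesis .
  qed
  ultimately show ?thesis unfolding fb_def by simp
qed

lemma fb_full:
  assumes inj: "inj_on e {..<D}" and len: "\<And>i. i < D \<Longrightarrow> length (e i) = n" and i: "i < D"
    and b: "length b = D"
  shows "fb D n e b (e i @ b @ v) = b ! i"
  using wd_e[OF inj len i, of "b @ v"] b i unfolding fb_def by (simp add: nth_append)

lemma CoT_Suc: "CoT (Suc k) f x = bar f (CoT k f x)"
  unfolding CoT_def by simp

lemma CoT_prefix:
  assumes inj: "inj_on e {..<D}" and len: "\<And>i. i < D \<Longrightarrow> length (e i) = n" and i: "i < D"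
    and b: "length b = D"
  shows "k \<le> D \<Longrightarrow> CoT k (fb D n e b) (e i) = e i @ take k b"
proof (induction k)
  case 0
  then show ?case unfolding CoT_def by simp
next
  case (Suc k)
  then have "CoT (Suc k) (fb D n e b) (e i) = e i @ take k b @ [b ! k]"
    using fb_prefix[OF inj len i b] by (simp add: CoT_Suc bar_def)
  also have "\<dots> = e i @ take (Suc k) b" using Suc.prems b by (simp add: take_Suc_conv_app_nth)
  finally show ?case .
qed

lemma CoT_full:
  assumes inj: "inj_on e {..<D}" and len: "\<And>i. i < D \<Longrightarrow> length (e i) = n" and i: "i < D"
    and b: "length b = D"
  shows "CoT (D + m) (fb D n e b) (e i) = e i @ b @ replicate m (b ! i)"
proof (induction m)
  case 0
  then show ?case using CoT_prefix[OF inj len i b, of D] b by simp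
next
  case (Suc m)
  then show ?case using fb_full[OF inj len i b]
    by (simp add: CoT_Suc bar_def replicate_append_same[symmetric])
qed

lemma e2e_fb:
  assumes inj: "inj_on e {..<D}" and len: "\<And>i. i < D \<Longrightarrow> length (e i) = n" and i: "i < D"
    and b: "length b = D" and T: "T > D"
  shows "e2e T (fb D n e b) (e i) = b ! i"
proof -
  obtain m where m: "T = Suc (D + m)" using T less_iff_Suc_add by auto
  show ?thesis unfolding e2e_def m CoT_Suc using CoT_full[OF inj len i b] fb_full[OF inj len i b]
    by (simp add: bar_def)
qed


lemma FF_finite: "finite (FF D n e)" and FF_card: "card (FF D n e) \<le> 2 ^ D"
  unfolding FF_def using fin_bool_lists[of D] card_bool_lists[of D]
  by (auto intro: card_image_le[THEN order.trans])

lemma e2e_FF_finite: "finite (e2e T ` FF D n e)" and e2e_FF_card: "card (e2e T ` FF D n e) \<le> 2 ^ D"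
  using FF_finite[of D n e] FF_card[of D n e] card_image_le[of "FF D n e" "e2e T"] by auto

lemma FF_shatters_le1:
  assumes "shatters (FF D n e) S" "finite S"
  shows "card S \<le> 1"
proof (rule ccontr)
  assume "\<not> card S \<le> 1"
  then obtain p q where pq: "p \<in> S" "q \<in> S" "p \<noteq> q"
    using card_le_Suc0_iff_eq[OF assms(2)] by auto
  have sh: "\<exists>f\<in>FF D n e. \<forall>x\<in>S. f x = (x \<in> A)" if "A \<subseteq> S" for A
    using assms(1) that unfolding shatters_def by blast
  obtain b1 where b1: "fb D n e b1 p" "fb D n e b1 q"
    using sh[of "{p,q}"] pq unfolding FF_def by auto
  obtain u v where uv: "wd D n e p = Some u" "wd D n e q = Some v" "prefix u b1" "prefix v b1"
    using b1 unfolding fb_def by (auto split: option.splits)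
  have "prefix u v \<or> prefix v u" using uv prefix_same_cases by blast
  then show False
  proof
    assume uv': "prefix u v"
    obtain b2 where "\<forall>x\<in>S. fb D n e b2 x = (x \<in> {q})"
      using sh[of "{q}"] pq unfolding FF_def by blast
    then have "fb D n e b2 q" "\<not> fb D n e b2 p" using pq by auto
    then show False using uv uv' unfolding fb_def by (auto intro: prefix_order.trans)
  next
    assume uv': "prefix v u"
    obtain b2 where "\<forall>x\<in>S. fb D n e b2 x = (x \<in> {p})"
      using sh[of "{p}"] pq unfolding FF_def by blast
    then have "fb D n e b2 p" "\<not> fb D n e b2 q" using pq by auto
    then show False using uv uv' unfolding fb_def by (auto intro: prefix_order.trans)
  qed
qed

lemma Ldim_FF:
  assumes inj: "inj_on e {..<D}" and len: "\<And>i. i < D \<Longrightarrow> length (e i) = n" and D: "D \<ge> 1"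
  shows "Ldim (FF D n e) = enat D"
  unfolding Ldim_def
proof (rule antisym)
  show "Sup {enat d |d. \<exists>t. \<forall>eps. length eps = d \<longrightarrow> (\<exists>f\<in>FF D n e. \<forall>i<d. f (t (take i eps)) = eps ! i)} \<le> enat D"
  proof (rule Sup_least)
    fix x assume "x \<in> {enat d |d. \<exists>t. \<forall>eps. length eps = d \<longrightarrow> (\<exists>f\<in>FF D n e. \<forall>i<d. f (t (take i eps)) = eps ! i)}"
    then obtain d t where x: "x = enat d" and t: "\<And>eps. length eps = d \<Longrightarrow> (\<exists>f\<in>FF D n e. \<forall>i<d. f (t (take i eps)) = eps ! i)"
      by blast
    obtain \<phi> where phi: "\<And>eps. length eps = d \<Longrightarrow> \<phi> eps \<in> FF D n e \<and> (\<forall>i<d. \<phi> eps (t (take i eps)) = eps ! i)"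
      using t by metis
    have "inj_on \<phi> {eps. length eps = d}"
    proof (rule inj_onI)
      fix xs ys assume xs: "xs \<in> {eps. length eps = d}" and ys: "ys \<in> {eps. length eps = d}" and eq: "\<phi> xs = \<phi> ys"
      show "xs = ys"
      proof (rule ccontr)
        assume "xs \<noteq> ys"
        then obtain i where i: "i < length xs" "take i xs = take i ys" "xs ! i \<noteq> ys ! i"
          using first_diff[of xs ys] xs ys by auto
        have "\<phi> xs (t (take i xs)) = xs ! i" using phi[of xs] xs i by auto
        moreover have "\<phi> ys (t (take i ys)) = ys ! i" using phi[of ys] ys xs i by auto
        ultimately show False using eq i by simp
      qed
    qed
    moreover have "\<phi> ` {eps. length eps = d} \<subseteq> FF D n e" using phi by auto
    ultimately have "card {eps :: bool list. length eps = d} \<le> card (FF D n e)"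
      using card_inj_on_le FF_finite by blast
    then have "(2::nat) ^ d \<le> 2 ^ D" using card_bool_lists[of d] FF_card[of D n e] by (metis order.trans)
    then have "d \<le> D" by simp
    then show "x \<le> enat D" using x by simp
  qed
  show "enat D \<le> Sup {enat d |d. \<exists>t. \<forall>eps. length eps = d \<longrightarrow> (\<exists>f\<in>FF D n e. \<forall>i<d. f (t (take i eps)) = eps ! i)}"
  proof (rule Sup_upper, intro CollectI exI conjI)
    show "enat D = enat D" by simp
    show "\<forall>eps. length eps = D \<longrightarrow> (\<exists>f\<in>FF D n e. \<forall>i<D. f ((\<lambda>u. e 0 @ u) (take i eps)) = eps ! i)"
    proof (intro allI impI)
      fix eps :: "bool list" assume l: "length eps = D"
      show "\<exists>f\<in>FF D n e. \<forall>i<D. f ((\<lambda>u. e 0 @ u) (take i eps)) = eps ! i"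
        using fb_prefix[OF inj len _ l] D l unfolding FF_def by force
    qed
  qed
qed

lemma VCdim_FF:
  assumes inj: "inj_on e {..<D}" and len: "\<And>i. i < D \<Longrightarrow> length (e i) = n" and D: "D \<ge> 1"
  shows "VCdim UNIV (FF D n e) = 1"
proof -
  have "VCdim UNIV (FF D n e) = enat 1"
  proof (rule VCdim_eqI[where Z = "{e 0}"])
    show "shatters (FF D n e) {e 0}"
      unfolding shatters_def
    proof (intro allI impI)
      fix A assume A: "A \<subseteq> {e 0}"
      define b where "b = (e 0 \<in> A) # replicate (D - 1) False"
      have lb: "length b = D" using D unfolding b_def by simp
      have "fb D n e b (e 0 @ take 0 b) = b ! 0" using fb_prefix[OF inj len _ lb, of 0 0] D by simp
      then have "fb D n e b (e 0) = (e 0 \<in> A)" unfolding b_def by simp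
      then show "\<exists>f\<in>FF D n e. \<forall>x\<in>{e 0}. f x = (x \<in> A)" using lb unfolding FF_def by auto
    qed
  qed (use FF_shatters_le1 in auto)
  then show ?thesis by (simp add: one_enat_def)
qed

lemma VCdim_e2e:
  assumes inj: "inj_on e {..<D}" and len: "\<And>i. i < D \<Longrightarrow> length (e i) = n" and T: "T > D"
    and X: "e ` {..<D} \<subseteq> X"
  shows "VCdim X (e2e T ` FF D n e) = enat D"
proof (rule VCdim_eqI[where Z = "e ` {..<D}"])
  show "card (e ` {..<D}) = D" using card_image[OF inj] by simp
  show "shatters (e2e T ` FF D n e) (e ` {..<D})"
    unfolding shatters_def
  proof (intro allI impI)
    fix A assume A: "A \<subseteq> e ` {..<D}"
    define b where "b = map (\<lambda>j. e j \<in> A) [0..<D]"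
    have lb: "length b = D" unfolding b_def by simp
    have "\<forall>x\<in>e ` {..<D}. e2e T (fb D n e b) x = (x \<in> A)"
      using e2e_fb[OF inj len _ lb T] unfolding b_def by auto
    then show "\<exists>f\<in>e2e T ` FF D n e. \<forall>x\<in>e ` {..<D}. f x = (x \<in> A)"
      using lb unfolding FF_def by auto
  qed
qed (use X in \<open>auto intro: shatters_le[OF e2e_FF_finite e2e_FF_card]\<close>)

lemma D_le_pow:
  assumes "D \<ge> (1::nat)"
  shows "D \<le> 2 ^ (nat \<lceil>log 2 (real D)\<rceil> + 1)"
proof -
  let ?n = "nat \<lceil>log 2 (real D)\<rceil> + 1"
  have "log 2 (real D) \<le> real ?n" by linarith
  then have "2 powr log 2 (real D) \<le> 2 powr real ?n" by (rule powr_mono) simp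
  moreover have "2 powr log 2 (real D) = real D" using assms by simp
  moreover have "2 powr real ?n = 2 ^ ?n" by (rule powr_realpow) simp
  ultimately have "real D \<le> 2 ^ ?n" by simp
  then show ?thesis by (metis of_nat_le_iff of_nat_numeral of_nat_power)
qed

theorem theoremE3:
  fixes D :: nat
  assumes "D \<ge> 1"
  shows "\<exists>F :: (bool list \<Rightarrow> bool) set.
           Ldim F = enat D \<and> VCdim UNIV F = 1 \<and>
           (\<forall>T. T > D \<longrightarrow>
              VCdim UNIV (e2e T ` F) = enat D \<and>
              VCdim {x. length x = nat \<lceil>log 2 (real D)\<rceil> + 1} (e2e T ` F) = enat D)"
proof -
  define n where "n = nat \<lceil>log 2 (real D)\<rceil> + 1"
  have "D \<le> card {xs :: bool list. length xs = n}"
    using D_le_pow[OF assms] card_bool_lists[of n] unfolding n_def by simp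
  then obtain S where S: "S \<subseteq> {xs :: bool list. length xs = n}" "card S = D"
    using obtain_subset_with_card_n by metis
  have "finite S" using S(1) fin_bool_lists[of n] finite_subset by blast
  then obtain e where e: "bij_betw e {0..<D} S" using ex_bij_betw_nat_finite S(2) by metis
  have inj: "inj_on e {..<D}" using e unfolding bij_betw_def by (simp add: lessThan_atLeast0)
  have len: "length (e i) = n" if "i < D" for i using bij_betwE[OF e] S(1) that by fastforce
  have X: "e ` {..<D} \<subseteq> {x. length x = n}" using len by auto
  show ?thesis
  proof (intro exI conjI allI impI)
    show "Ldim (FF D n e) = enat D" using Ldim_FF[OF inj len assms] .
    show "VCdim UNIV (FF D n e) = 1" using VCdim_FF[OF inj len assms] .
    fix T assume T: "D < T"
    show "VCdim UNIV (e2e T ` FF D n e) = enat D" using VCdim_e2e[OF inj len T] by simp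
    show "VCdim {x. length x = nat \<lceil>log 2 (real D)\<rceil> + 1} (e2e T ` FF D n e) = enat D"
      using VCdim_e2e[OF inj len T X] unfolding n_def .
  qed
qed

end
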